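(* Let $(N,+,* )$ be a nilpotent ring with adjoint operation $x\circ y=x+y+x*y$, let $S$ be a subring and $I$ a two-sided ideal of $N$ with $S\cap I=\{0\}$ and $N=S+I$. Then every $x\in N$ can be written uniquely as $x=s\circ i$ with $s\in S$, $i\in I$; define $x\bullet y=s\circ y\circ i$, so that $(N,+,\bullet)$ is a left brace, and let $r$ be its Yang–Baxter map. Let $X\subseteq N$ be such that $(X,r)$ is a solution of the set-theoretic Yang–Baxter equation, and let $J\subseteq I\cap X$ be a two-sided ideal of the ring $N$. Let $k:X\to X$ satisfy, for every $x\in X$: $k(x+j)=k(x)$ whenever $j\in J$ and $x+j\in X$; $k(x)-x\in J$; and $b\bullet k(x)=k(x)+b$ for all $b\in N$. Then $k$ is a reflection of $(X,r)$.
   Context: A (left) brace is a triple $(B,+,\circ)$ with $(B,+)$ abelian group, $(B,\circ)$ group, and $x\circ(y+z)=x\circ y+x\circ z-x$. The Yang–Baxter map of the brace $(N,+,\bullet)$ is $r(x,y)=(\sigma_x(y),\tau_y(x))$ with $\sigma_x(y)=x\bullet y-x$ and $\tau_y(x)=(\sigma_x(y))^{-1}\bullet x-(\sigma_x(y))^{-1}$, inverses taken in $(N,\bullet)$. For $X\subseteq N$, $(X,r)$ is a solution of the set-theoretic Yang–Baxter equation if $r(X\times X)\subseteq X\times X$ and $(\mathrm{id}\times r)(r\times\mathrm{id})(\mathrm{id}\times r)=(r\times\mathrm{id})(\mathrm{id}\times r)(r\times\mathrm{id})$ on $X^3$. A map $k:X\to X$ is a reflection of $(X,r)$ if $r(\mathrm{id}\times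 k)r(\mathrm{id}\times k)=(\mathrm{id}\times k)r(\mathrm{id}\times k)r$ on $X\times X$. *)

theory Defs
  imports Main
begin

text \<open>Rings here are possibly non-unital: Isabelle's class ring has no 1.
  The ring N is the whole carrier of the type.\<close>

fun nprod :: "'a::ring list \<Rightarrow> 'a" where
  "nprod [] = 0"
| "nprod [x] = x"
| "nprod (x # y # ys) = x * nprod (y # ys)"

definition nilpotent_ring :: "'a::ring itself \<Rightarrow> bool" where
  "nilpotent_ring _ \<longleftrightarrow> (\<exists>n>0. \<forall>xs::'a list. length xs = n \<longrightarrow> nprod xs = 0)"

definition adj :: "'a::ring \<Rightarrow> 'a \<Rightarrow> 'a" where
  "adj x y = x + y + x * y"

definition is_subring :: "'a::ring set \<Rightarrow> bool" where
  "is_subring S \<longleftrightarrow> 0 \<in> S \<and> (\<forall>x\<in>S. \<forall>y\<in>S. x + y \<in> S \<and> x - y \<in> S \<and> x * y \<in> S)"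

definition is_ideal :: "'a::ring set \<Rightarrow> bool" where
  "is_ideal I \<longleftrightarrow> 0 \<in> I \<and> (\<forall>x\<in>I. \<forall>y\<in>I. x + y \<in> I \<and> x - y \<in> I)
     \<and> (\<forall>x\<in>I. \<forall>b. b * x \<in> I \<and> x * b \<in> I)"

definition decomp :: "'a::ring set \<Rightarrow> 'a set \<Rightarrow> 'a \<Rightarrow> 'a \<times> 'a" where
  "decomp S I x = (THE p. fst p \<in> S \<and> snd p \<in> I \<and> x = adj (fst p) (snd p))"

definition bullet :: "'a::ring set \<Rightarrow> 'a set \<Rightarrow> 'a \<Rightarrow> 'a \<Rightarrow> 'a" where
  "bullet S I x y = (let (s, i) = decomp S I x in adj (adj s y) i)"

definition binv :: "'a::ring set \<Rightarrow> 'a set \<Rightarrow> 'a \<Rightarrow> 'a" where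
  "binv S I x = (THE y. bullet S I x y = 0 \<and> bullet S I y x = 0)"

definition sigma :: "'a::ring set \<Rightarrow> 'a set \<Rightarrow> 'a \<Rightarrow> 'a \<Rightarrow> 'a" where
  "sigma S I x y = bullet S I x y - x"

definition tau :: "'a::ring set \<Rightarrow> 'a set \<Rightarrow> 'a \<Rightarrow> 'a \<Rightarrow> 'a" where
  "tau S I y x = (let u = binv S I (sigma S I x y) in bullet S I u x - u)"

definition ybmap :: "'a::ring set \<Rightarrow> 'a set \<Rightarrow> 'a \<times> 'a \<Rightarrow> 'a \<times> 'a" where
  "ybmap S I p = (sigma S I (fst p) (snd p), tau S I (snd p) (fst p))"

definition is_YB_solution :: "('a \<times> 'a \<Rightarrow> 'a \<times> 'a) \<Rightarrow> 'a set \<Rightarrow> bool" where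
  "is_YB_solution r X \<longleftrightarrow>
     (\<forall>x\<in>X. \<forall>y\<in>X. r (x, y) \<in> X \<times> X) \<and>
     (\<forall>x\<in>X. \<forall>y\<in>X. \<forall>z\<in>X.
        (let r1 = (\<lambda>(a, b, c). (case r (a, b) of (a', b') \<Rightarrow> (a', b', c)));
             r2 = (\<lambda>(a, b, c). (case r (b, c) of (b', c') \<Rightarrow> (a, b', c')))
         in r2 (r1 (r2 (x, y, z))) = r1 (r2 (r1 (x, y, z)))))"

definition is_reflection :: "('a \<times> 'a \<Rightarrow> 'a \<times> 'a) \<Rightarrow> 'a set \<Rightarrow> ('a \<Rightarrow> 'a) \<Rightarrow> bool" where
  "is_reflection r X k \<longleftrightarrow>
     (\<forall>x\<in>X. \<forall>y\<in>X.
        (let idk = (\<lambda>(a, b). (a, k b))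
         in r (idk (r (idk (x, y)))) = idk (r (idk (r (x, y))))))"

end

theory Submission imports Defs begin

lemma adj_assoc: "adj (adj x y) z = adj x (adj y (z::'a::ring))"
  by (simp add: adj_def algebra_simps)
lemma adj_0[simp]: "adj 0 x = x" "adj x 0 = (x::'a::ring)"
  by (simp_all add: adj_def)

lemma nprod_cons: "ys \<noteq> [] \<Longrightarrow> nprod (y # ys) = y * nprod ys"
  by (cases ys) auto

fun qg :: "'a::ring \<Rightarrow> nat \<Rightarrow> 'a" where
  "qg x 0 = -x" | "qg x (Suc n) = -x - x * qg x n"

lemma qg_comm: "x * qg x n = qg x n * x"
proof (induction n)
  case (Suc n)
  have "x * qg x (Suc n) = -(x*x) - x * (x * qg x n)" by (simp add: algebra_simps)
  also have "\<dots> = -(x*x) - x * (qg x n * x)" using Suc by simp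
  also have "\<dots> = qg x (Suc n) * x" by (simp add: algebra_simps)
  finally show ?case .
qed simp

lemma qg_e: "adj x (qg x n) = nprod (replicate (Suc n) (-x) @ [x])"
proof (induction n)
  case 0 then show ?case by (simp add: adj_def)
next
  case (Suc n)
  have "adj x (qg x (Suc n)) = -x * adj x (qg x n)" by (simp add: adj_def algebra_simps)
  also have "\<dots> = nprod (replicate (Suc (Suc n)) (-x) @ [x])"
    using Suc by (simp add: nprod_cons)
  finally show ?case .
qed

lemma qinv: assumes "nilpotent_ring TYPE('a::ring)" shows "\<exists>w. adj x w = 0 \<and> adj w x = (0::'a)"
proof -
  obtain m where m: "m > 0" "\<forall>xs::'a list. length xs = m \<longrightarrow> nprod xs = 0"
    using assms unfolding nilpotent_ring_def by blast
  show ?thesis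
  proof (cases "m = 1")
    case True
    then have "nprod [x] = 0" using m(2)[rule_format, of "[x]"] by simp
    then show ?thesis by (intro exI[of _ 0]) simp
  next
    case False
    then have "length (replicate (Suc (m-2)) (-x) @ [x]) = m" using m by simp
    then have e: "adj x (qg x (m-2)) = 0" using m qg_e by metis
    moreover have "adj (qg x (m-2)) x = adj x (qg x (m-2))"
      using qg_comm[of x "m-2"] by (simp add: adj_def algebra_simps)
    ultimately show ?thesis by metis
  qed
qed

lemma ideal_add: "is_ideal J \<Longrightarrow> x \<in> J \<Longrightarrow> y \<in> J \<Longrightarrow> x + y \<in> J"
  and ideal_diff: "is_ideal J \<Longrightarrow> x \<in> J \<Longrightarrow> y \<in> J \<Longrightarrow> x - y \<in> J"
  and ideal_lmult: "is_ideal J \<Longrightarrow> x \<in> J \<Longrightarrow> b * x \<in> J"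
  and ideal_rmult: "is_ideal J \<Longrightarrow> x \<in> J \<Longrightarrow> x * b \<in> J"
  and ideal_0: "is_ideal J \<Longrightarrow> 0 \<in> J"
  by (auto simp: is_ideal_def)

lemma ideal_uminus: "is_ideal J \<Longrightarrow> x \<in> J \<Longrightarrow> - x \<in> J"
  using ideal_diff[of J 0 x] ideal_0[of J] by simp

lemma sub_add: "is_subring S \<Longrightarrow> x \<in> S \<Longrightarrow> y \<in> S \<Longrightarrow> x + y \<in> S"
  and sub_diff: "is_subring S \<Longrightarrow> x \<in> S \<Longrightarrow> y \<in> S \<Longrightarrow> x - y \<in> S"
  and sub_mult: "is_subring S \<Longrightarrow> x \<in> S \<Longrightarrow> y \<in> S \<Longrightarrow> x * y \<in> S"
  by (auto simp: is_subring_def)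

locale bsetup =
  fixes S I :: "'a::ring set"
  assumes nil: "nilpotent_ring TYPE('a)" and sub: "is_subring S" and idl: "is_ideal I"
    and inter: "S \<inter> I = {0}" and ssum: "\<forall>x. \<exists>s\<in>S. \<exists>i\<in>I. x = s + i"
begin

lemma d_unique:
  assumes "s\<in>S" "i\<in>I" "s'\<in>S" "i'\<in>I" "adj s i = adj s' i'"
  shows "s = s' \<and> i = i'"
proof -
  have "s + (i + s*i) = s' + (i' + s'*i')" using assms(5) by (simp add: adj_def add.assoc)
  then have "s - s' = (i' + s'*i') - (i + s*i)" by (simp add: algebra_simps)
  also have "\<dots> \<in> I" using assms idl
    by (intro ideal_diff ideal_add ideal_lmult) auto
  finally have "s - s' \<in> S \<inter> I" using assms sub sub_diff by blast
  then have ss: "s = s'" using inter by auto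
  define d where "d = i - i'"
  have e: "d + s*d = 0" using assms(5) unfolding ss d_def adj_def by (simp add: algebra_simps)
  obtain w where w: "adj s w = 0" "adj w s = 0" using qinv[OF nil] by blast
  have "d = d + (adj w s) * d" using w by simp
  also have "\<dots> = (d + s*d) + w * (d + s*d)" by (simp add: adj_def algebra_simps)
  also have "\<dots> = 0" using e by simp
  finally show ?thesis using ss d_def by simp
qed

lemma d_exists: "\<exists>s\<in>S. \<exists>i\<in>I. x = adj s i"
proof -
  obtain s i' where si: "s \<in> S" "i' \<in> I" "x = s + i'" using ssum by blast
  obtain w where w: "adj s w = 0" "adj w s = 0" using qinv[OF nil] by blast
  have "adj s (i' + w*i') = s + i' + (adj s w) * i'" by (simp add: adj_def algebra_simps)
  then have "x = adj s (i' + w*i')" using w si by simp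
  moreover have "i' + w*i' \<in> I" using idl si by (intro ideal_add ideal_lmult) auto
  ultimately show ?thesis using si by blast
qed

lemma d_ex1: "\<exists>!p. fst p \<in> S \<and> snd p \<in> I \<and> x = adj (fst p) (snd p)"
proof -
  obtain s i where si: "s\<in>S" "i\<in>I" "x = adj s i" using d_exists by blast
  show ?thesis
  proof (rule ex1I[of _ "(s,i)"])
    show "fst (s,i) \<in> S \<and> snd (s,i) \<in> I \<and> x = adj (fst (s,i)) (snd (s,i))" using si by simp
    fix p assume p: "fst p \<in> S \<and> snd p \<in> I \<and> x = adj (fst p) (snd p)"
    have e: "adj (fst p) (snd p) = adj s i" using p si(3) by metis
    have "fst p = s \<and> snd p = i" using d_unique[OF _ _ si(1,2) e] p by blast
    then show "p = (s,i)" by (simp add: prod_eq_iff)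
  qed
qed

lemma decomp_prop:
  "fst (decomp S I x) \<in> S \<and> snd (decomp S I x) \<in> I \<and> x = adj (fst (decomp S I x)) (snd (decomp S I x))"
  unfolding decomp_def by (rule theI'[OF d_ex1])

lemma decomp_eq: "s \<in> S \<Longrightarrow> i \<in> I \<Longrightarrow> decomp S I (adj s i) = (s,i)"
  unfolding decomp_def by (rule the1_equality[OF d_ex1]) auto

lemma bullet_expl:
  "bullet S I w y = w + (y + fst (decomp S I w) * y + y * snd (decomp S I w)
     + fst (decomp S I w) * y * snd (decomp S I w))"
proof -
  obtain s i where d: "decomp S I w = (s,i)" by (cases "decomp S I w")
  then have "w = adj s i" using decomp_prop[of w] by simp
  then show ?thesis unfolding bullet_def d by (simp add: adj_def algebra_simps)
qed

lemma bullet_lin: "bullet S I w (p + q) = bullet S I w p + bullet S I w q - w"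
  unfolding bullet_expl by (simp add: algebra_simps)

lemma bullet_J: "is_ideal J \<Longrightarrow> j \<in> J \<Longrightarrow> bullet S I w j - w \<in> J"
proof -
  assume J: "is_ideal J" "j \<in> J"
  let ?s = "fst (decomp S I w)" and ?i = "snd (decomp S I w)"
  have "?s * j \<in> J" "j * ?i \<in> J" using J by (auto intro: ideal_lmult ideal_rmult)
  moreover have "?s * j * ?i \<in> J" using J by (auto intro: ideal_lmult ideal_rmult)
  ultimately have "j + ?s * j + j * ?i + ?s * j * ?i \<in> J" using J by (auto intro!: ideal_add)
  then show ?thesis unfolding bullet_expl by simp
qed

lemma bullet_diff:
  assumes J: "is_ideal J" "J \<subseteq> I" and c: "c - c' \<in> J"
  shows "(bullet S I c x - c) - (bullet S I c' x - c') \<in> J"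
proof -
  obtain s i where d: "decomp S I c = (s,i)" by (cases "decomp S I c")
  obtain s' i' where d': "decomp S I c' = (s',i')" by (cases "decomp S I c'")
  have p: "s \<in> S" "i \<in> I" "c = adj s i" using decomp_prop[of c] d by auto
  have p': "s' \<in> S" "i' \<in> I" "c' = adj s' i'" using decomp_prop[of c'] d' by auto
  have "s - s' = (c - c') - ((i + s*i) - (i' + s'*i'))" using p p' by (simp add: adj_def algebra_simps)
  also have "\<dots> \<in> I"
  proof -
    have "c - c' \<in> I" using c J by auto
    moreover have "(i + s*i) - (i' + s'*i') \<in> I" using p p' idl
      by (intro ideal_diff ideal_add ideal_lmult) auto
    ultimately show ?thesis using idl by (rule_tac ideal_diff) auto
  qed
  finally have "s - s' \<in> S \<inter> I" using p p' sub sub_diff by blast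
  then have ss: "s = s'" using inter by auto
  define e where "e = c - c'"
  define dd where "dd = i - i'"
  have e: "e = dd + s*dd" using p p' ss unfolding e_def dd_def by (simp add: adj_def algebra_simps)
  obtain w where w: "adj s w = 0" "adj w s = 0" using qinv[OF nil] by blast
  have "dd = dd + (adj w s) * dd" using w by simp
  also have "\<dots> = e + w * e" unfolding e by (simp add: adj_def algebra_simps)
  finally have ddJ: "dd \<in> J" using J c e_def by (auto intro!: ideal_add ideal_lmult)
  have "(bullet S I c x - c) - (bullet S I c' x - c') = x * dd + s * (x * dd)"
    unfolding bullet_expl d d' ss dd_def by (simp add: algebra_simps)
  also have "\<dots> \<in> J" using ddJ J by (auto intro!: ideal_add ideal_lmult)
  finally show ?thesis .
qed

lemma binv_left: "bullet S I (binv S I a) a = 0"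
proof -
  obtain s i where d: "decomp S I a = (s,i)" by (cases "decomp S I a")
  have p: "s \<in> S" "i \<in> I" "a = adj s i" using decomp_prop[of a] d by auto
  obtain w where w: "adj s w = 0" "adj w s = 0" using qinv[OF nil] by blast
  obtain v where v: "adj i v = 0" "adj v i = 0" using qinv[OF nil] by blast
  have vI: "v \<in> I"
  proof -
    have "v = - i - i * v" using v(1) unfolding adj_def by (simp add: algebra_simps eq_neg_iff_add_eq_0)
    then show ?thesis using p idl by (metis ideal_diff ideal_rmult ideal_uminus)
  qed
  obtain s2 i2 where q: "s2 \<in> S" "i2 \<in> I" "w = adj s2 i2" using d_exists by blast
  have "adj (adj s s2) i2 = adj 0 0" using w q by (simp add: adj_assoc)
  moreover have "adj s s2 \<in> S" using p q sub unfolding adj_def by (intro sub_add sub_mult) auto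
  ultimately have "adj s s2 = 0 \<and> i2 = 0" using q sub idl d_unique
    by (metis ideal_0 is_subring_def)
  then have wS: "w \<in> S" using q by simp
  define u where "u = adj w v"
  have du: "decomp S I u = (w, v)" unfolding u_def using wS vI decomp_eq by blast
  have "bullet S I u a = adj (adj w (adj s i)) v" unfolding bullet_def du using p by simp
  also have "\<dots> = adj (adj (adj w s) i) v" by (simp add: adj_assoc)
  finally have bu: "bullet S I u a = 0" using w v by simp
  have "bullet S I a u = adj (adj s (adj w v)) i" unfolding bullet_def d u_def by simp
  also have "\<dots> = adj (adj (adj s w) v) i" by (simp add: adj_assoc)
  finally have ua: "bullet S I a u = 0" using w v by simp
  have uniq: "z = u" if "bullet S I a z = 0" for z
  proof -
    have "adj (adj s z) i = 0" using that unfolding bullet_def d by simp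
    then have "adj w (adj (adj (adj s z) i) v) = adj w (adj 0 v)" by simp
    moreover have "adj w (adj (adj (adj s z) i) v) = adj (adj w s) (adj z (adj i v))"
      by (simp add: adj_assoc)
    ultimately show ?thesis unfolding u_def using w v by simp
  qed
  have "binv S I a = u" unfolding binv_def
  proof (rule the_equality)
    show "bullet S I a u = 0 \<and> bullet S I u a = 0" using bu ua by blast
    fix z assume "bullet S I a z = 0 \<and> bullet S I z a = 0"
    then show "z = u" using uniq by blast
  qed
  then show ?thesis using bu by simp
qed

end

theorem mainTheorem10:
  fixes S I X J :: "'a::ring set" and k :: "'a \<Rightarrow> 'a"
  assumes "nilpotent_ring TYPE('a)"
    and "is_subring S" and "is_ideal I"
    and "S \<inter> I = {0}" and "\<forall>x. \<exists>s\<in>S. \<exists>i\<in>I. x = s + i"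
    and "is_YB_solution (ybmap S I) X"
    and "J \<subseteq> I \<inter> X" and "is_ideal J"
    and "\<forall>x\<in>X. k x \<in> X"
    and "\<forall>x\<in>X. \<forall>j\<in>J. x + j \<in> X \<longrightarrow> k (x + j) = k x"
    and "\<forall>x\<in>X. k x - x \<in> J"
    and "\<forall>x\<in>X. \<forall>b. bullet S I b (k x) = k x + b"
  shows "is_reflection (ybmap S I) X k"
proof -
  interpret bsetup S I using assms(1-5) by unfold_locales auto
  have JI: "J \<subseteq> I" using assms(7) by auto
  have Jid: "is_ideal J" by (rule assms(8))
  have kX: "\<And>x. x\<in>X \<Longrightarrow> k x \<in> X" using assms(9) by auto
  have kJ: "k y = k x" if "x\<in>X" "y\<in>X" "y - x \<in> J" for x y
    using assms(10)[rule_format, of x "y - x"] that by simp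
  have kk: "k (k x) = k x" if "x\<in>X" for x
    using kJ[of x "k x"] kX assms(11) that by auto
  have hb: "\<And>x b. x\<in>X \<Longrightarrow> bullet S I b (k x) = k x + b" using assms(12) by auto
  have sigk: "\<And>x w. x\<in>X \<Longrightarrow> sigma S I w (k x) = k x" by (simp add: sigma_def hb)
  have binvk: "binv S I (k x) = - k x" if "x\<in>X" for x
  proof -
    have "k x + binv S I (k x) = 0" using binv_left[of "k x"] hb[OF that] by simp
    then show ?thesis by (simp add: eq_neg_iff_add_eq_0 add.commute)
  qed
  have tauk: "tau S I (k x) w = bullet S I (- k x) w + k x" if "x\<in>X" for x w
    unfolding tau_def Let_def sigk[OF that] binvk[OF that] by simp
  have cl: "sigma S I x y \<in> X \<and> tau S I y x \<in> X" if "x\<in>X" "y\<in>X" for x y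
    using assms(6) that unfolding is_YB_solution_def ybmap_def by auto
  show ?thesis unfolding is_reflection_def
  proof (intro ballI)
    fix x y assume x: "x\<in>X" and y: "y\<in>X"
    define t where "t = tau S I (k y) x"
    define a where "a = sigma S I x y"
    define b where "b = tau S I y x"
    have tX: "t \<in> X" using cl x kX y t_def by blast
    have aX: "a \<in> X" using cl x y a_def by blast
    have bX: "b \<in> X" using cl x y b_def by blast
    have A: "a - k y \<in> J"
    proof -
      have "bullet S I x (k y) = bullet S I x y + bullet S I x (k y - y) - x"
        using bullet_lin[of x y "k y - y"] by simp
      then have "a - k y = - (bullet S I x (k y - y) - x)"
        unfolding a_def sigma_def using hb[OF y, of x] by (simp add: algebra_simps)
      also have "\<dots> \<in> J" using Jid assms(11) y by (intro ideal_uminus bullet_J) auto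
      finally show ?thesis .
    qed
    define u where "u = binv S I a"
    have U: "- k y - u \<in> J"
    proof -
      have "0 = bullet S I u (k y + (a - k y))" using binv_left[of a] u_def by simp
      also have "\<dots> = k y + u + (bullet S I u (a - k y) - u)"
        using bullet_lin[of u "k y" "a - k y"] hb[OF y, of u] by simp
      finally have "- k y - u = bullet S I u (a - k y) - u"
        by (simp add: algebra_simps eq_neg_iff_add_eq_0) (metis add_eq_0_iff)
      also have "\<dots> \<in> J" using Jid A by (rule bullet_J)
      finally show ?thesis .
    qed
    have i: "k t = k b"
    proof -
      have tt: "t = bullet S I (- k y) x + k y" using tauk[OF y] t_def by simp
      have bb: "b = bullet S I u x - u" unfolding b_def tau_def Let_def u_def a_def by simp
      have "t - b = (bullet S I (- k y) x - (- k y)) - (bullet S I u x - u)"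
        unfolding tt bb by simp
      also have "\<dots> \<in> J" using bullet_diff[OF Jid JI U] by simp
      finally show ?thesis using kJ bX tX by blast
    qed
    have c: "k (tau S I (k b) a) = k y"
    proof -
      have "bullet S I (- k b) (k y + (a - k y)) = bullet S I (- k b) (k y) + bullet S I (- k b) (a - k y) - (- k b)"
        by (rule bullet_lin)
      then have "tau S I (k b) a - k y = bullet S I (- k b) (a - k y) - (- k b)"
        unfolding tauk[OF bX] using hb[OF y, of "- k b"] by (simp add: algebra_simps)
      also have "\<dots> \<in> J" using Jid A by (rule bullet_J)
      finally have "tau S I (k b) a - k (k y) \<in> J" using kk y by simp
      moreover have "tau S I (k b) a \<in> X" using cl aX kX bX by blast
      ultimately show ?thesis using kJ kk kX y by metis
    qed
    show "let idk = (\<lambda>(a, b). (a, k b))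
         in ybmap S I (idk (ybmap S I (idk (x, y)))) = idk (ybmap S I (idk (ybmap S I (x, y))))"
      unfolding Let_def ybmap_def
      using i c by (simp add: sigk x y kX tX bX tauk hb flip: t_def a_def b_def)
  qed
qed

end
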